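(* Let $S$ be a set, $x\in\mathbb{R}$, $b\neq 0$, and let $f:\mathbb{R}\to S$ be a scenario that is past-periodic on $(-\infty,x)$ with period $b$. If $f$ is periodic, then $b$ is a period of $f$, i.e. $f(y)=f(y+b)$ for all $y\in\mathbb{R}$.
   Context: A scenario is a function $f:\mathbb{R}\to S$. For $b\in\mathbb{R}$, $t^b(y)=y+b$. A scenario $f$ is periodic if there is $c\neq 0$ with $f=f\circ t^c$ ($c$ is then a period of $f$). $f$ is past-periodic on $(-\infty,x)$ with period $b$ if $b\ne 0$ and $f\upharpoonright(-\infty,x)=(f\circ t^b)\upharpoonright(-\infty,x)$. *)

theory Defs
  imports Complex_Main
begin

definition transl :: "real \<Rightarrow> real \<Rightarrow> real" where
  "transl b = (\<lambda>y. y + b)"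

definition is_period :: "(real \<Rightarrow> 'a) \<Rightarrow> real \<Rightarrow> bool" where
  "is_period f c \<longleftrightarrow> c \<noteq> 0 \<and> f = f \<circ> transl c"

definition periodic :: "(real \<Rightarrow> 'a) \<Rightarrow> bool" where
  "periodic f \<longleftrightarrow> (\<exists>c. is_period f c)"

definition past_periodic :: "(real \<Rightarrow> 'a) \<Rightarrow> real \<Rightarrow> real \<Rightarrow> bool" where
  "past_periodic f x b \<longleftrightarrow> b \<noteq> 0 \<and>
     (\<forall>y\<in>{..<x}. f y = (f \<circ> transl b) y)"

end

theory Submission
  imports Defs
begin

theorem lemma3:
  fixes f :: "real \<Rightarrow> 'a" and x b :: real
  assumes "b \<noteq> 0"
    and "past_periodic f x b"
    and "periodic f"
  shows "is_period f b \<and> (\<forall>y. f y = f (y + b))"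
proof -
  obtain c where c0: "c \<noteq> 0" and fc: "f = f \<circ> transl c"
    using assms(3) unfolding periodic_def is_period_def by blast
  have fc': "\<And>y. f y = f (y + c)" using fc unfolding transl_def
    by (metis comp_apply)
  define d where "d = \<bar>c\<bar>"
  have d0: "d > 0" using c0 d_def by simp
  have fd: "\<And>y. f y = f (y + d)"
  proof -
    fix y
    show "f y = f (y + d)"
    proof (cases "c \<ge> 0")
      case True thus ?thesis using fc' d_def by simp
    next
      case False
      have "f (y + d) = f (y + d + c)" using fc' by blast
      thus ?thesis using False d_def by simp
    qed
  qed
  have fn: "\<And>y. f y = f (y - real n * d)" for n :: nat
  proof (induction n)
    case 0 thus ?case by simp
  next
    case (Suc n)
    show ?case
    proof -
    fix y
    have "f (y - real (Suc n) * d) = f (y - real (Suc n) * d + d)" using fd by blast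
    also have "y - real (Suc n) * d + d = y - real n * d" by (simp add: algebra_simps)
    finally show "f y = f (y - real (Suc n) * d)" using Suc by metis
    qed
  qed
  have pp: "\<And>y. y < x \<Longrightarrow> f y = f (y + b)"
    using assms(2) unfolding past_periodic_def transl_def by simp
  have main: "\<forall>y. f y = f (y + b)"
  proof
    fix y
    obtain n :: nat where n: "(\<bar>y\<bar> + \<bar>b\<bar> + \<bar>x\<bar> + 1) / d < real n"
      using reals_Archimedean2 by blast
    hence "\<bar>y\<bar> + \<bar>b\<bar> + \<bar>x\<bar> + 1 < real n * d" using d0
      by (simp add: divide_less_eq)
    hence lt: "y - real n * d < x" "y - real n * d + b < x" by linarith+
    have "f y = f (y - real n * d)" using fn by blast
    also have "\<dots> = f (y - real n * d + b)" using pp lt(1) by blast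
    also have "y - real n * d + b = (y + b) - real n * d" by simp
    also have "f \<dots> = f (y + b)" using fn by metis
    finally show "f y = f (y + b)" .
  qed
  have "f = f \<circ> transl b" using main unfolding transl_def by (auto simp: fun_eq_iff)
  thus ?thesis using main assms(1) unfolding is_period_def by blast
qed

end
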